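(* Let $\gamma<1$ and suppose that $$\lim_{x\uparrow\infty}\frac{u_0'(x)}{x^{\gamma-1}}=1.$$ Then, for each $t_0\ge 0$, $$\lim_{x\uparrow\infty} r_x(x,t_0)=\frac{1}{1-\gamma}.$$
   Context: Let $\mu$ be a nonzero finite positive Borel measure on $(0,\infty)$ such that $\int y e^{yz}\mu(dy)<\infty$ for every $z\in\mathbb{R}$. Define $h(z,t):=\int e^{yz-\frac12 y^2 t}\mu(dy)$ for $(z,t)\in\mathbb{R}\times[0,\infty)$. For each $t$, the map $z\mapsto h(z,t)$ is smooth and strictly increasing with range $(0,\infty)$. Let $h^{(-1)}(x,t)$ denote its inverse in $z$. Let $u:(0,\infty)\times[0,\infty)\to\mathbb{R}$ be smooth, strictly increasing and strictly concave in $x$, solving $u_t=\frac12 u_x^2/u_{xx}$, and related to $h$ by $u_x(h(z,t),t)=e^{-z+t/2}$ for all $(z,t)$. Write $u_0(x):=u(x,0)$. The risk tolerance function is $r(x,t):=-u_x(x,t)/u_{xx}(x,t)$. Equivalently, $r(x,t)=h_z(h^{(-1)}(x,t),t)$, and $r_x$ denotes its partial derivative in $x$. *)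

theory Defs
  imports "HOL-Analysis.Analysis" "HOL-Probability.Probability"
begin

definition hfun :: "real measure \<Rightarrow> real \<Rightarrow> real \<Rightarrow> real" where
  "hfun \<mu> z t = (\<integral>y. exp (y * z - (1/2) * y\<^sup>2 * t) \<partial>\<mu>)"

definition dx :: "(real \<Rightarrow> real \<Rightarrow> real) \<Rightarrow> real \<Rightarrow> real \<Rightarrow> real" where
  "dx u x t = deriv (\<lambda>y. u y t) x"

definition risk_tol :: "(real \<Rightarrow> real \<Rightarrow> real) \<Rightarrow> real \<Rightarrow> real \<Rightarrow> real" where
  "risk_tol u x t = - dx u x t / dx (dx u) x t"

definition strictly_concave_on :: "real set \<Rightarrow> (real \<Rightarrow> real) \<Rightarrow> bool" where
  "strictly_concave_on S f \<longleftrightarrow> convex S \<and>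
     (\<forall>x\<in>S. \<forall>y\<in>S. x \<noteq> y \<longrightarrow> (\<forall>a. 0 < a \<and> a < 1 \<longrightarrow>
        f ((1 - a) * x + a * y) > (1 - a) * f x + a * f y))"

end

theory Submission
  imports Defs
begin


locale mus =
  fixes \<mu> :: "real measure"
  assumes sets_mu: "sets \<mu> = sets borel"
    and fin: "finite_measure \<mu>"
    and supp: "emeasure \<mu> {..0} = 0"
    and nonzero: "emeasure \<mu> (space \<mu>) \<noteq> 0"
    and integ: "\<And>z. integrable \<mu> (\<lambda>y. y * exp (y * z))"
begin

interpretation finite_measure \<mu> by (rule fin)

lemma space_mu: "space \<mu> = UNIV"
  using sets_eq_imp_space_eq[OF sets_mu] by simp

lemma meas_mu: "(f::real\<Rightarrow>real) \<in> borel_measurable \<mu> \<longleftrightarrow> f \<in> borel_measurable borel"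
proof -
  have "borel_measurable \<mu> = (borel_measurable borel :: (real\<Rightarrow>real) set)"
    by (rule measurable_cong_sets[OF sets_mu refl])
  thus ?thesis by simp
qed

lemma sets_mu_iff: "A \<in> sets \<mu> \<longleftrightarrow> A \<in> sets borel"
  using sets_mu by simp

lemma AE_pos: "AE y in \<mu>. 0 < y"
proof (rule AE_I')
  show "{..0} \<in> null_sets \<mu>" using supp sets_mu by (simp add: null_sets_def)
  show "{x \<in> space \<mu>. \<not> 0 < x} \<subseteq> {..0}" by auto
qed

lemma integ_pow: 
  assumes "k \<le> (2::nat)"
  shows "integrable \<mu> (\<lambda>y. y ^ k * exp (y * c))"
proof -
  have m: "(\<lambda>y. y ^ k * exp (y * c)) \<in> borel_measurable \<mu>" by (simp add: meas_mu)
  consider "k = 0" | "k = 1" | "k = 2" using assms by linarith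
  then show ?thesis
  proof cases
    case 1
    have "integrable \<mu> (\<lambda>y. exp \<bar>c\<bar> + y * exp (y * c))"
      by (rule Bochner_Integration.integrable_add[OF finite_measure.integrable_const[OF fin] integ])
    then show ?thesis
    proof (rule Bochner_Integration.integrable_bound)
      show "AE y in \<mu>. norm (y ^ k * exp (y * c)) \<le> norm (exp \<bar>c\<bar> + y * exp (y * c))"
        using AE_pos
      proof eventually_elim
        case (elim y)
        show ?case
        proof (cases "y \<ge> 1")
          case True
          then have "1 * exp (y*c) \<le> y * exp (y*c)" by (intro mult_right_mono) auto
          moreover have "0 < exp \<bar>c\<bar>" by simp
          moreover have "norm (y^k*exp(y*c)) = exp(y*c)" using 1 by simp
          moreover have "norm (exp \<bar>c\<bar> + y*exp(y*c)) = exp \<bar>c\<bar> + y*exp(y*c)" using elim by simp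
          ultimately show ?thesis by linarith
        next
          case False
          have "y * c \<le> y * \<bar>c\<bar>" using elim by (intro mult_left_mono) auto
          also have "\<dots> \<le> 1 * \<bar>c\<bar>" using elim False by (intro mult_right_mono) auto
          finally have "y * c \<le> \<bar>c\<bar>" by simp
          then have "exp (y*c) \<le> exp \<bar>c\<bar>" by simp
          moreover have "0 \<le> y * exp (y*c)" using elim by simp
          moreover have "norm (y^k*exp(y*c)) = exp(y*c)" using 1 by simp
          moreover have "norm (exp \<bar>c\<bar> + y*exp(y*c)) = exp \<bar>c\<bar> + y*exp(y*c)" using elim by simp
          ultimately show ?thesis by linarith
        qed
      qed
    qed (use m 1 in auto)
  next
    case 2 then show ?thesis using integ by simp
  next
    case 3
    have "integrable \<mu> (\<lambda>y. y * exp (y * (c+1)))" using integ by simp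
    then show ?thesis
    proof (rule Bochner_Integration.integrable_bound)
      show "AE y in \<mu>. norm (y ^ k * exp (y * c)) \<le> norm (y * exp (y * (c+1)))"
        using AE_pos
      proof eventually_elim
        case (elim y)
        have "y \<le> exp y" using exp_ge_add_one_self[of y] by linarith
        then have "y * y * exp (y*c) \<le> y * exp y * exp (y*c)" using elim by (simp add: mult_right_mono)
        moreover have "exp (y * (c+1)) = exp y * exp (y*c)" by (simp add: exp_add[symmetric] algebra_simps)
        ultimately show ?case using 3 elim by (simp add: power2_eq_square mult.assoc)
      qed
    qed (use m 3 in auto)
  qed
qed

end


lemma deriv_integral:
  fixes M :: "real measure" and f f' :: "real \<Rightarrow> real \<Rightarrow> real" and z0 :: real and w :: "real \<Rightarrow> real"
  assumes fm: "\<And>z. integrable M (f z)"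
   and dm: "f' z0 \<in> borel_measurable M"
   and der: "AE y in M. \<forall>z. ((\<lambda>z. f z y) has_real_derivative f' z y) (at z)"
   and w: "integrable M w"
   and bnd: "AE y in M. \<forall>z \<in> ball z0 1. \<bar>f' z y\<bar> \<le> w y"
  shows "((\<lambda>z. \<integral>y. f z y \<partial>M) has_real_derivative (\<integral>y. f' z0 y \<partial>M)) (at z0)"
proof -
  let ?F = "\<lambda>z. \<integral>y. f z y \<partial>M"
  have "((\<lambda>z. (?F z - ?F z0) / (z - z0)) \<longlongrightarrow> (\<integral>y. f' z0 y \<partial>M)) (at z0 within ball z0 1)"
    unfolding tendsto_at_iff_sequentially
  proof (intro allI impI)
    fix X :: "nat \<Rightarrow> real"
    assume X: "\<forall>i. X i \<in> ball z0 1 - {z0}" and Xl: "X \<longlonglongrightarrow> z0"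
    let ?Q = "\<lambda>i y. (f (X i) y - f z0 y) / (X i - z0)"
    have eq: "(?F (X i) - ?F z0) / (X i - z0) = (\<integral>y. ?Q i y \<partial>M)" for i
      using fm by (simp add: integral_diff)
    have "(\<lambda>i. \<integral>y. ?Q i y \<partial>M) \<longlonglongrightarrow> (\<integral>y. f' z0 y \<partial>M)"
    proof (rule integral_dominated_convergence[where w=w])
      show "\<And>i. ?Q i \<in> borel_measurable M" using fm by measurable
      show "f' z0 \<in> borel_measurable M" by (rule dm)
      show "integrable M w" by (rule w)
      show "AE y in M. (\<lambda>i. ?Q i y) \<longlonglongrightarrow> f' z0 y"
        using der
      proof eventually_elim
        case (elim y)
        have "((\<lambda>z. f z y) has_real_derivative f' z0 y) (at z0)" using elim by blast
        then have "((\<lambda>z. (f z y - f z0 y) / (z - z0)) \<longlongrightarrow> f' z0 y) (at z0)"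
          unfolding has_field_derivative_iff .
        then show ?case unfolding tendsto_at_iff_sequentially comp_def using X Xl by auto
      qed
      show "AE y in M. norm (?Q i y) \<le> w y" for i
        using der bnd
      proof eventually_elim
        case (elim y)
        have "norm (f (X i) y - f z0 y) \<le> w y * norm (X i - z0)"
        proof (rule field_differentiable_bound[where S="ball z0 1" and f'="\<lambda>z. f' z y"])
          show "convex (ball z0 1)" by simp
          show "((\<lambda>z. f z y) has_field_derivative f' z y) (at z within ball z0 1)" for z
            using elim(1) has_field_derivative_at_within by blast
          show "norm (f' z y) \<le> w y" if "z \<in> ball z0 1" for z using elim(2) that by auto
          show "X i \<in> ball z0 1" using X by auto
          show "z0 \<in> ball z0 1" by simp
        qed
        moreover have "X i \<noteq> z0" using X by auto
        ultimately show ?case by (simp add: divide_le_eq abs_divide)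
      qed
    qed
    then show "((\<lambda>z. (?F z - ?F z0) / (z - z0)) \<circ> X) \<longlonglongrightarrow> (\<integral>y. f' z0 y \<partial>M)"
      unfolding comp_def eq .
  qed
  then have "((\<lambda>z. \<integral>y. f z y \<partial>M) has_real_derivative (\<integral>y. f' z0 y \<partial>M)) (at z0 within ball z0 1)"
    using has_field_derivative_iff by blast
  then show ?thesis using at_within_open[of z0 "ball z0 1"] by simp
qed



context mus begin

definition H :: "nat \<Rightarrow> real \<Rightarrow> real \<Rightarrow> real" where
  "H k z t = (\<integral>y. y ^ k * exp (y * z - 1/2 * y\<^sup>2 * t) \<partial>\<mu>)"

lemma hfun_H: "hfun \<mu> z t = H 0 z t"
  by (simp add: hfun_def H_def)

lemma H_integrable:
  assumes "k \<le> 2" "t \<ge> 0"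
  shows "integrable \<mu> (\<lambda>y. y ^ k * exp (y * z - 1/2 * y\<^sup>2 * t))"
proof (rule Bochner_Integration.integrable_bound[OF integ_pow[OF assms(1), of z]])
  show "(\<lambda>y. y ^ k * exp (y * z - 1/2 * y\<^sup>2 * t)) \<in> borel_measurable \<mu>"
    by (simp add: meas_mu)
  show "AE y in \<mu>. norm (y ^ k * exp (y * z - 1/2 * y\<^sup>2 * t)) \<le> norm (y ^ k * exp (y * z))"
    using AE_pos
  proof eventually_elim
    case (elim y)
    have "exp (y * z - 1/2 * y\<^sup>2 * t) \<le> exp (y * z)" using assms(2) by simp
    then have "y ^ k * exp (y * z - 1/2 * y\<^sup>2 * t) \<le> y ^ k * exp (y * z)"
      using elim by (intro mult_left_mono) auto
    then show ?case using elim by simp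
  qed
qed

lemma H_deriv:
  assumes "k \<le> 1" "t \<ge> 0"
  shows "((\<lambda>z. H k z t) has_real_derivative H (Suc k) z0 t) (at z0)"
  unfolding H_def
proof (rule deriv_integral[where w="\<lambda>y. y ^ Suc k * exp (y * (\<bar>z0\<bar> + 1))"])
  show "integrable \<mu> (\<lambda>y. y ^ k * exp (y * z - 1/2 * y\<^sup>2 * t))" for z
    using assms by (intro H_integrable) auto
  show "(\<lambda>y. y ^ Suc k * exp (y * z0 - 1/2 * y\<^sup>2 * t)) \<in> borel_measurable \<mu>"
    by (simp add: meas_mu)
  show "AE y in \<mu>. \<forall>z. ((\<lambda>z. y ^ k * exp (y * z - 1/2 * y\<^sup>2 * t)) has_real_derivative
            y ^ Suc k * exp (y * z - 1/2 * y\<^sup>2 * t)) (at z)"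
  proof (intro AE_I2 allI)
    fix y z :: real
    show "((\<lambda>z. y ^ k * exp (y * z - 1/2 * y\<^sup>2 * t)) has_real_derivative
            y ^ Suc k * exp (y * z - 1/2 * y\<^sup>2 * t)) (at z)"
      by (auto intro!: derivative_eq_intros)
  qed
  show "integrable \<mu> (\<lambda>y. y ^ Suc k * exp (y * (\<bar>z0\<bar> + 1)))"
    using assms by (intro integ_pow) auto
  show "AE y in \<mu>. \<forall>z \<in> ball z0 1. \<bar>y ^ Suc k * exp (y * z - 1/2 * y\<^sup>2 * t)\<bar> \<le> y ^ Suc k * exp (y * (\<bar>z0\<bar> + 1))"
    using AE_pos
  proof eventually_elim
    case (elim y)
    show ?case
    proof (intro ballI)
    fix z assume zb: "z \<in> ball z0 1"
    have "\<bar>z - z0\<bar> < 1" using zb by (simp add: dist_real_def)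
    then have "z \<le> \<bar>z0\<bar> + 1" by linarith
    then have "y * z \<le> y * (\<bar>z0\<bar> + 1)" using elim(1) by (intro mult_left_mono) auto
    moreover have "0 \<le> y\<^sup>2 * t" using assms by simp
    ultimately have "exp (y * z - 1/2 * y\<^sup>2 * t) \<le> exp (y * (\<bar>z0\<bar> + 1))" by simp
    then have "y ^ Suc k * exp (y * z - 1/2 * y\<^sup>2 * t) \<le> y ^ Suc k * exp (y * (\<bar>z0\<bar> + 1))"
      using elim by (intro mult_left_mono) auto
    then show "\<bar>y ^ Suc k * exp (y * z - 1/2 * y\<^sup>2 * t)\<bar> \<le> y ^ Suc k * exp (y * (\<bar>z0\<bar> + 1))" using elim by simp
    qed
  qed
qed

lemma H_pos:
  assumes "k \<le> 2" "t \<ge> 0"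
  shows "H k z t > 0"
proof -
  have int: "integrable \<mu> (\<lambda>y. y ^ k * exp (y * z - 1/2 * y\<^sup>2 * t))"
    using assms by (rule H_integrable)
  have nn: "AE y in \<mu>. 0 \<le> y ^ k * exp (y * z - 1/2 * y\<^sup>2 * t)"
    using AE_pos by eventually_elim simp
  have ge: "H k z t \<ge> 0" unfolding H_def using nn by (rule integral_nonneg_AE)
  have "H k z t \<noteq> 0"
  proof
    assume "H k z t = 0"
    then have "AE y in \<mu>. y ^ k * exp (y * z - 1/2 * y\<^sup>2 * t) = 0"
      unfolding H_def using integral_nonneg_eq_0_iff_AE[OF int nn] by simp
    with AE_pos have "AE y in \<mu>. False" by eventually_elim simp
    then have "ae_filter \<mu> = bot" using trivial_limit_def by blast
    then show False using nonzero ae_filter_eq_bot_iff by blast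
  qed
  with ge show ?thesis by simp
qed

end


lemma exp_lin_at_top:
  fixes b c :: real assumes "b > 0"
  shows "filterlim (\<lambda>z. b * z + c) at_top at_top"
proof -
  have "filterlim (\<lambda>z. b * z) at_top at_top"
    using filterlim_tendsto_pos_mult_at_top[OF tendsto_const assms filterlim_ident] .
  then have "filterlim (\<lambda>z. c + b * z) at_top at_top" by (rule filterlim_tendsto_add_at_top[OF tendsto_const])
  then show ?thesis by (simp add: add.commute)
qed

context mus begin

interpretation fm: finite_measure \<mu> by (rule fin)

lemma measure_pos_of_emeasure:
  "emeasure \<mu> A \<noteq> 0 \<Longrightarrow> Sigma_Algebra.measure \<mu> A > 0"
proof -
  assume a: "emeasure \<mu> A \<noteq> 0"
  have "Sigma_Algebra.measure \<mu> A \<ge> 0" by (rule measure_nonneg)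
  moreover have "Sigma_Algebra.measure \<mu> A \<noteq> 0" using a fm.emeasure_eq_measure[of A] by auto
  ultimately show ?thesis by linarith
qed

lemma pos_mass_above:
  assumes "emeasure \<mu> {c<..} \<noteq> 0"
  shows "\<exists>e>0. Sigma_Algebra.measure \<mu> {c+e..} > 0"
proof (rule ccontr)
  assume "\<not> ?thesis"
  then have "emeasure \<mu> {c + 1 / Suc n..} = 0" for n
    using measure_pos_of_emeasure[of "{c + 1 / Suc n..}"] by fastforce
  then have "{c + 1 / Suc n..} \<in> null_sets \<mu>" for n
    by (simp add: null_sets_def sets_mu)
  then have "(\<Union>n. {c + 1 / Suc n..}) \<in> null_sets \<mu>" by auto
  moreover have "(\<Union>n. {c + 1 / Suc n..}) = {c<..}"
  proof
    show "{c<..} \<subseteq> (\<Union>n. {c + 1 / Suc n..})"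
    proof
      fix x assume "x \<in> {c<..}"
      then have "x - c > 0" by simp
      then obtain n where "1 / Suc n < x - c" using nat_approx_posE by blast
      then have "c + 1 / Suc n \<le> x" by simp
      then show "x \<in> (\<Union>n. {c + 1 / Suc n..})" by blast
    qed
    show "(\<Union>n. {c + 1 / Suc n..}) \<subseteq> {c<..}"
    proof
      fix x assume "x \<in> (\<Union>n. {c + 1 / Suc n..})"
      then obtain n where "c + 1 / Suc n \<le> x" by auto
      moreover have "1 / Suc n > 0" by simp
      ultimately have "c < x" by linarith
      then show "x \<in> {c<..}" by simp
    qed
  qed
  ultimately show False using assms by (simp add: null_sets_def)
qed

definition EE :: "real \<Rightarrow> real \<Rightarrow> real" where
  "EE c z = (\<integral>y. exp ((y - c) * z) \<partial>\<mu>)"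

lemma exp_split: fixes y c z :: real shows "exp ((y - c) * z) = exp (- c * z) * exp (y * z)"
proof -
  have eq: "(y - c) * z = - c * z + y * z" by (simp add: algebra_simps)
  have e: "exp (- c * z + y * z) = exp (- c * z) * exp (y * z)" by (rule exp_add)
  show ?thesis using e eq by metis
qed

lemma EE_integrable: "integrable \<mu> (\<lambda>y. exp ((y - c) * z))"
proof -
  have "integrable \<mu> (\<lambda>y. exp (- c * z) * (y ^ 0 * exp (y * z)))"
    by (intro integrable_mult_right integ_pow) auto
  then show ?thesis
    by (simp add: exp_split)
qed

lemma EE_eq: "EE c z = exp (- c * z) * hfun \<mu> z 0"
proof -
  have "EE c z = (\<integral>y. exp (- c * z) * exp (y * z) \<partial>\<mu>)"
    unfolding EE_def by (simp add: exp_split)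
  also have "\<dots> = exp (- c * z) * hfun \<mu> z 0"
    by (simp add: hfun_def)
  finally show ?thesis .
qed

lemma EE_lower:
  assumes "z \<ge> 0" "b \<ge> c"
  shows "EE c z \<ge> Sigma_Algebra.measure \<mu> {b..} * exp ((b - c) * z)"
proof -
  have "Sigma_Algebra.measure \<mu> {b..} * exp ((b - c) * z) = (\<integral>y. indicator {b..} y * exp ((b - c) * z) \<partial>\<mu>)"
    by (simp add: space_mu)
  also have "\<dots> \<le> EE c z"
    unfolding EE_def
  proof (rule integral_mono)
    show "integrable \<mu> (\<lambda>y. indicator {b..} y * exp ((b - c) * z))"
      by (intro integrable_mult_left) (simp add: integrable_indicator_iff space_mu sets_mu fm.emeasure_eq_measure)
    show "integrable \<mu> (\<lambda>y. exp ((y - c) * z))" by (rule EE_integrable)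
    show "indicator {b..} y * exp ((b - c) * z) \<le> exp ((y - c) * z)" for y
    proof (cases "y \<ge> b")
      case True
      then have "(b - c) * z \<le> (y - c) * z" using assms by (intro mult_right_mono) auto
      then show ?thesis using True by simp
    qed simp
  qed
  finally show ?thesis .
qed

lemma EE_at_top:
  assumes "b > c" "Sigma_Algebra.measure \<mu> {b..} > 0"
  shows "filterlim (EE c) at_top at_top"
proof (rule filterlim_at_top_mono)
  have "filterlim (\<lambda>z. (b - c) * z + 0) at_top at_top" using assms by (intro exp_lin_at_top) auto
  then have "filterlim (\<lambda>z. exp ((b - c) * z + 0)) at_top at_top" by (rule filterlim_compose[OF exp_at_top])
  then show "filterlim (\<lambda>z. Sigma_Algebra.measure \<mu> {b..} * exp ((b - c) * z)) at_top at_top"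
    using filterlim_tendsto_pos_mult_at_top[OF tendsto_const assms(2)] by simp
  show "\<forall>\<^sub>F z in at_top. Sigma_Algebra.measure \<mu> {b..} * exp ((b - c) * z) \<le> EE c z"
    using eventually_ge_at_top[of 0] by eventually_elim (use assms in \<open>auto intro: EE_lower\<close>)
qed

lemma h0_at_top: "filterlim (\<lambda>z. hfun \<mu> z 0) at_top at_top"
proof -
  have "emeasure \<mu> {0<..} \<noteq> 0"
  proof -
    have "{..0} \<in> null_sets \<mu>" using supp sets_mu by (simp add: null_sets_def)
    then have "emeasure \<mu> ({0<..} \<union> {..0}) = emeasure \<mu> {0<..}"
      by (intro emeasure_Un_null_set) (simp add: sets_mu)
    moreover have "{0<..} \<union> {..0} = space \<mu>" using space_mu by auto
    ultimately show ?thesis using nonzero by simp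
  qed
  then obtain e where e: "e > 0" "Sigma_Algebra.measure \<mu> {0+e..} > 0" using pos_mass_above by blast
  have "filterlim (EE 0) at_top at_top" using e by (intro EE_at_top[of 0 e]) auto
  moreover have "EE 0 = (\<lambda>z. hfun \<mu> z 0)" using EE_eq by (simp add: fun_eq_iff)
  ultimately show ?thesis by simp
qed

end


lemma contra_lim:
  fixes f :: "real \<Rightarrow> real"
  assumes "filterlim f at_top at_top" "(f \<longlongrightarrow> l) at_top"
  shows False
proof -
  have "\<forall>\<^sub>F z in at_top. f z \<ge> l + 1" using assms(1) by (simp add: filterlim_at_top)
  moreover have "\<forall>\<^sub>F z in at_top. f z < l + 1" using assms(2) by (rule order_tendstoD) simp
  ultimately have "\<forall>\<^sub>F z in at_top. f z \<ge> l + 1 \<and> f z < l + 1" by (rule eventually_conj)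
  then obtain N where "\<forall>n\<ge>N. l + 1 \<le> f n \<and> f n < l + 1" by (auto simp: eventually_at_top_linorder)
  then show False by force
qed

context mus begin

interpretation fm: finite_measure \<mu> by (rule fin)

context
  fixes a :: real
  assumes apos: "a > 0"
    and L: "((\<lambda>z. exp (- a * z) * hfun \<mu> z 0) \<longlongrightarrow> 1) at_top"
begin

lemma EE_a: "(EE a \<longlongrightarrow> 1) at_top"
proof -
  have "EE a = (\<lambda>z. exp (- a * z) * hfun \<mu> z 0)" using EE_eq by (simp add: fun_eq_iff)
  then show ?thesis using L by simp
qed

lemma no_mass_above: "emeasure \<mu> {a<..} = 0"
proof (rule ccontr)
  assume "emeasure \<mu> {a<..} \<noteq> 0"
  then obtain e where e: "e > 0" "Sigma_Algebra.measure \<mu> {a+e..} > 0" using pos_mass_above by blast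
  then have "filterlim (EE a) at_top at_top" by (intro EE_at_top) auto
  then show False using EE_a by (rule contra_lim)
qed

lemma AE_le_a: "AE y in \<mu>. 0 < y \<and> y \<le> a"
proof -
  have "AE y in \<mu>. y \<le> a"
  proof (rule AE_I')
    show "{a<..} \<in> null_sets \<mu>" using no_mass_above by (simp add: null_sets_def sets_mu)
    show "{x \<in> space \<mu>. \<not> x \<le> a} \<subseteq> {a<..}" by auto
  qed
  with AE_pos show ?thesis by eventually_elim simp
qed

definition G :: "nat \<Rightarrow> real \<Rightarrow> real \<Rightarrow> real" where
  "G k t z = (\<integral>y. y ^ k * exp ((y - a) * z - 1/2 * y\<^sup>2 * t) \<partial>\<mu>)"

lemma G_lim:
  assumes t: "t \<ge> 0"
  shows "(G k t \<longlongrightarrow> Sigma_Algebra.measure \<mu> {a} * (a ^ k * exp (- 1/2 * a\<^sup>2 * t))) at_top"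
proof -
  let ?c = "a ^ k * exp (- 1/2 * a\<^sup>2 * t)"
  have "((\<lambda>z. \<integral>y. y ^ k * exp ((y - a) * z - 1/2 * y\<^sup>2 * t) \<partial>\<mu>) \<longlongrightarrow> (\<integral>y. indicator {a} y * ?c \<partial>\<mu>)) at_top"
  proof (rule integral_dominated_convergence_at_top[where w="\<lambda>_. a ^ k"])
    show "(\<lambda>y. indicator {a} y * ?c) \<in> borel_measurable \<mu>" by (simp add: meas_mu)
    show "(\<lambda>y. y ^ k * exp ((y - a) * z - 1/2 * y\<^sup>2 * t)) \<in> borel_measurable \<mu>" for z
      by (simp add: meas_mu)
    show "integrable \<mu> (\<lambda>_. a ^ k)" by simp
    show "AE y in \<mu>. ((\<lambda>z. y ^ k * exp ((y - a) * z - 1/2 * y\<^sup>2 * t)) \<longlongrightarrow> indicator {a} y * ?c) at_top"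
      using AE_le_a
    proof eventually_elim
      case (elim y)
      show ?case
      proof (cases "y = a")
        case True
        then show ?thesis by (simp add: indicator_def)
      next
        case False
        with elim have ya: "a - y > 0" by simp
        have "filterlim (\<lambda>z. (a - y) * z + 1/2 * y\<^sup>2 * t) at_top at_top"
          using ya by (rule exp_lin_at_top)
        then have "filterlim (\<lambda>z. - ((a - y) * z + 1/2 * y\<^sup>2 * t)) at_bot at_top"
          by (simp add: filterlim_uminus_at_top)
        then have "((\<lambda>z. exp (- ((a - y) * z + 1/2 * y\<^sup>2 * t))) \<longlongrightarrow> 0) at_top"
          by (rule filterlim_compose[OF exp_at_bot])
        then have "((\<lambda>z. y ^ k * exp (- ((a - y) * z + 1/2 * y\<^sup>2 * t))) \<longlongrightarrow> y ^ k * 0) at_top"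
          by (intro tendsto_mult tendsto_const)
        moreover have "- ((a - y) * z + 1/2 * y\<^sup>2 * t) = (y - a) * z - 1/2 * y\<^sup>2 * t" for z
          by (simp add: algebra_simps)
        ultimately show ?thesis using False by (simp add: indicator_def)
      qed
    qed
    show "\<forall>\<^sub>F z in at_top. AE y in \<mu>. norm (y ^ k * exp ((y - a) * z - 1/2 * y\<^sup>2 * t)) \<le> a ^ k"
      using eventually_ge_at_top[of 0]
    proof eventually_elim
      case (elim z)
      show ?case using AE_le_a
      proof eventually_elim
        case (elim y)
        have "(y - a) * z \<le> 0" using elim \<open>0 \<le> z\<close> by (simp add: mult_nonpos_nonneg)
        moreover have "0 \<le> y\<^sup>2 * t" using t by simp
        ultimately have "exp ((y - a) * z - 1/2 * y\<^sup>2 * t) \<le> 1" by simp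
        moreover have "y ^ k \<le> a ^ k" using elim by (intro power_mono) auto
        ultimately have "y ^ k * exp ((y - a) * z - 1/2 * y\<^sup>2 * t) \<le> a ^ k * 1"
          using elim by (intro mult_mono) auto
        then show ?case using elim by simp
      qed
    qed
  qed
  moreover have "(\<integral>y. indicator {a} y * ?c \<partial>\<mu>) = Sigma_Algebra.measure \<mu> {a} * ?c"
    by (simp add: space_mu)
  ultimately show ?thesis unfolding G_def[abs_def] by (simp add: space_mu)
qed

lemma mass_a: "Sigma_Algebra.measure \<mu> {a} = 1"
proof -
  have "G 0 0 = EE a" by (simp add: G_def EE_def fun_eq_iff)
  then have "(EE a \<longlongrightarrow> Sigma_Algebra.measure \<mu> {a}) at_top" using G_lim[of 0 0] by simp
  then show ?thesis using EE_a tendsto_unique[OF trivial_limit_at_top_linorder] by blast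
qed

lemma G_H: "G k t z = exp (- a * z) * H k z t"
proof -
  have "G k t z = (\<integral>y. exp (- a * z) * (y ^ k * exp (y * z - 1/2 * y\<^sup>2 * t)) \<partial>\<mu>)"
    unfolding G_def
  proof (rule Bochner_Integration.integral_cong[OF refl])
    fix y
    have eq: "(y - a) * z - 1/2 * y\<^sup>2 * t = - a * z + (y * z - 1/2 * y\<^sup>2 * t)" by (simp add: algebra_simps)
    have "exp (- a * z + (y * z - 1/2 * y\<^sup>2 * t)) = exp (- a * z) * exp (y * z - 1/2 * y\<^sup>2 * t)"
      by (rule exp_add)
    then show "y ^ k * exp ((y - a) * z - 1/2 * y\<^sup>2 * t) = exp (- a * z) * (y ^ k * exp (y * z - 1/2 * y\<^sup>2 * t))"
      unfolding eq by simp
  qed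
  then show ?thesis by (simp add: H_def)
qed

end
end


lemma rx_formula:
  fixes u :: "real \<Rightarrow> real \<Rightarrow> real" and h h1 h2 :: "real \<Rightarrow> real" and t z :: real
  assumes smooth: "\<And>x n. x > 0 \<Longrightarrow> (deriv ^^ n) (\<lambda>y. u y t) differentiable (at x)"
    and rel: "\<And>z. dx u (h z) t = exp (- z + t / 2)"
    and dh: "\<And>z. (h has_real_derivative h1 z) (at z)"
    and dh1: "\<And>z. (h1 has_real_derivative h2 z) (at z)"
    and hpos: "\<And>z. h z > 0" and h1pos: "\<And>z. h1 z > 0"
  shows "deriv (\<lambda>y. risk_tol u y t) (h z) = h2 z / h1 z"
proof -
  define f where "f = (\<lambda>y. u y t)"
  have U1: "(\<lambda>x. dx u x t) = deriv f" by (simp add: dx_def f_def fun_eq_iff)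
  have U2: "(\<lambda>x. dx (dx u) x t) = deriv (deriv f)"
    by (simp add: dx_def f_def fun_eq_iff)
  have d1: "(deriv f has_real_derivative deriv (deriv f) x) (at x)" if "x > 0" for x
    using smooth[OF that, of 1] unfolding f_def[symmetric]
    by (simp add: DERIV_deriv_iff_real_differentiable)
  have d2: "(deriv (deriv f) has_real_derivative deriv (deriv (deriv f)) x) (at x)" if "x > 0" for x
    using smooth[OF that, of 2] unfolding f_def[symmetric]
    by (simp add: DERIV_deriv_iff_real_differentiable numeral_2_eq_2)
  have rel': "deriv f (h z) = exp (- z + t / 2)" for z
    using rel[of z] U1 by metis
  have step1: "deriv (deriv f) (h z) * h1 z = - exp (- z + t / 2)" for z
  proof -
    have A: "((\<lambda>z. deriv f (h z)) has_real_derivative deriv (deriv f) (h z) * h1 z) (at z)"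
      by (rule DERIV_chain2[OF d1[OF hpos] dh])
    have B: "((\<lambda>z. deriv f (h z)) has_real_derivative - exp (- z + t / 2)) (at z)"
      unfolding rel' by (auto intro!: derivative_eq_intros)
    show ?thesis using DERIV_unique[OF A B] .
  qed
  have ne: "deriv (deriv f) (h z) \<noteq> 0" for z
    using step1[of z] by (metis exp_not_eq_zero mult_zero_left neg_equal_0_iff_equal)
  have R: "(\<lambda>y. risk_tol u y t) = (\<lambda>x. - deriv f x / deriv (deriv f) x)"
    unfolding risk_tol_def by (metis U1 U2)
  have step2: "- deriv f (h z) / deriv (deriv f) (h z) = h1 z" for z
  proof -
    have e: "deriv f (h z) = - (deriv (deriv f) (h z) * h1 z)" using step1[of z] rel'[of z] by simp
    show ?thesis unfolding e using ne[of z] by simp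
  qed
  define x where "x = h z"
  define D where "D = ((- deriv (deriv f) x) * deriv (deriv f) x - (- deriv f x) * deriv (deriv (deriv f)) x) / (deriv (deriv f) x * deriv (deriv f) x)"
  have dR: "((\<lambda>x. - deriv f x / deriv (deriv f) x) has_real_derivative D) (at x)"
    unfolding D_def
    by (rule DERIV_divide[OF DERIV_minus[OF d1[OF hpos[of z, folded x_def]]] d2[OF hpos[of z, folded x_def]] ne[of z, folded x_def]])
  have C1: "((\<lambda>z. - deriv f (h z) / deriv (deriv f) (h z)) has_real_derivative D * h1 z) (at z)"
    using DERIV_chain2[OF dR[unfolded x_def] dh] .
  have C2: "((\<lambda>z. - deriv f (h z) / deriv (deriv f) (h z)) has_real_derivative h2 z) (at z)"
    unfolding step2 by (rule dh1)
  have "D * h1 z = h2 z" using DERIV_unique[OF C1 C2] .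
  then have "D = h2 z / h1 z" using h1pos[of z] by (simp add: field_simps)
  moreover have "deriv (\<lambda>y. risk_tol u y t) (h z) = D"
    unfolding R x_def[symmetric] using dR by (rule DERIV_imp_deriv)
  ultimately show ?thesis by simp
qed



lemma powr_lim:
  fixes U h :: "real \<Rightarrow> real" and \<gamma> :: real
  assumes lim: "((\<lambda>x. U x / x powr (\<gamma> - 1)) \<longlongrightarrow> 1) at_top"
   and hl: "filterlim h at_top at_top" and hu: "\<And>z. U (h z) = exp (- z)"
   and hp: "\<And>z. h z > 0" and g: "\<gamma> < 1"
  shows "((\<lambda>z. exp (- (1 / (1 - \<gamma>)) * z) * h z) \<longlongrightarrow> 1) at_top"
proof -
  define a where "a = 1 / (1 - \<gamma>)"
  define q where "q z = exp (- z) / h z powr (\<gamma> - 1)" for z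
  have ql: "(q \<longlongrightarrow> 1) at_top"
    using filterlim_compose[OF lim hl] unfolding q_def[abs_def] hu .
  have "((\<lambda>z. q z powr a) \<longlongrightarrow> 1 powr a) at_top"
    by (rule tendsto_powr[OF ql tendsto_const]) simp
  moreover have "q z powr a = exp (- a * z) * h z" for z
  proof -
    have hq: "q z = exp (- z - (\<gamma> - 1) * ln (h z))"
      unfolding q_def using hp[of z] by (simp add: powr_def exp_diff)
    have "a * (- z - (\<gamma> - 1) * ln (h z)) = - a * z + ln (h z)"
      using g unfolding a_def by (simp add: field_simps)
    then have "q z powr a = exp (- a * z + ln (h z))"
      unfolding hq by (simp add: powr_def)
    also have "\<dots> = exp (- a * z) * h z" using hp[of z] by (simp add: exp_diff exp_minus field_simps)
    finally show ?thesis .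
  qed
  ultimately show ?thesis unfolding a_def by simp
qed

theorem corollary4:
  fixes \<mu> :: "real measure" and u :: "real \<Rightarrow> real \<Rightarrow> real" and \<gamma> t0 :: real
  assumes sets_mu: "sets \<mu> = sets borel"
    and fin: "finite_measure \<mu>"
    and supp: "emeasure \<mu> {..0} = 0"
    and nonzero: "emeasure \<mu> (space \<mu>) \<noteq> 0"
    and integ: "\<And>z. integrable \<mu> (\<lambda>y. y * exp (y * z))"
    and smooth_x: "\<And>x t n. x > 0 \<Longrightarrow> t \<ge> 0 \<Longrightarrow>
                     (deriv ^^ n) (\<lambda>y. u y t) differentiable (at x)"
    and incr: "\<And>t. t \<ge> 0 \<Longrightarrow> strict_mono_on {0<..} (\<lambda>x. u x t)"
    and conc: "\<And>t. t \<ge> 0 \<Longrightarrow> strictly_concave_on {0<..} (\<lambda>x. u x t)"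
    and pde: "\<And>x t. x > 0 \<Longrightarrow> t \<ge> 0 \<Longrightarrow>
                ((\<lambda>s. u x s) has_real_derivative
                   ((1/2) * (dx u x t)\<^sup>2 / dx (dx u) x t)) (at t within {0..})"
    and rel: "\<And>z t. t \<ge> 0 \<Longrightarrow> dx u (hfun \<mu> z t) t = exp (- z + t / 2)"
    and gam: "\<gamma> < 1"
    and lim0: "((\<lambda>x. dx u x 0 / x powr (\<gamma> - 1)) \<longlongrightarrow> 1) at_top"
    and t0: "t0 \<ge> 0"
  shows "((\<lambda>x. deriv (\<lambda>y. risk_tol u y t0) x) \<longlongrightarrow> 1 / (1 - \<gamma>)) at_top"
proof -
  interpret m: mus \<mu>
    by (rule mus.intro[OF sets_mu fin supp nonzero integ])
  define a where "a = 1 / (1 - \<gamma>)"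
  have apos: "a > 0" using gam unfolding a_def by simp
  have L: "((\<lambda>z. exp (- a * z) * hfun \<mu> z 0) \<longlongrightarrow> 1) at_top"
    unfolding a_def
  proof (rule powr_lim[OF lim0 m.h0_at_top _ _ gam])
    show "dx u (hfun \<mu> z 0) 0 = exp (- z)" for z using rel[of 0 z] by simp
    show "hfun \<mu> z 0 > 0" for z using m.H_pos[of 0 0 z] by (simp add: m.hfun_H)
  qed
  define E where "E = exp (- 1/2 * a\<^sup>2 * t0)"
  have Epos: "E > 0" unfolding E_def by simp
  have GL: "(m.G a k t0 \<longlongrightarrow> a ^ k * E) at_top" for k
    using m.G_lim[OF apos L t0, of k] m.mass_a[OF apos L] unfolding E_def by simp
  have GH: "m.G a k t0 z = exp (- a * z) * m.H k z t0" for k z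
    by (rule m.G_H[OF apos L])
  define h where "h z = m.H 0 z t0" for z
  define g where "g z = m.H 2 z t0 / m.H 1 z t0" for z
  have g_lim: "(g \<longlongrightarrow> a) at_top"
  proof -
    have "((\<lambda>z. m.G a 2 t0 z / m.G a 1 t0 z) \<longlongrightarrow> (a ^ 2 * E) / (a ^ 1 * E)) at_top"
      by (rule tendsto_divide[OF GL GL]) (use apos Epos in simp)
    moreover have "m.G a 2 t0 z / m.G a 1 t0 z = g z" for z
      unfolding GH g_def by simp
    moreover have "(a ^ 2 * E) / (a ^ 1 * E) = a" using apos Epos by (simp add: power2_eq_square)
    ultimately show ?thesis by simp
  qed
  have hpos: "h z > 0" for z unfolding h_def using m.H_pos[of 0 t0 z] t0 by simp
  have h1pos: "m.H 1 z t0 > 0" for z using m.H_pos[of 1 t0 z] t0 by simp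
  have dh: "(h has_real_derivative m.H 1 z t0) (at z)" for z
    unfolding h_def[abs_def] using m.H_deriv[of 0 t0 z] t0 by simp
  have dh1: "((\<lambda>z. m.H 1 z t0) has_real_derivative m.H 2 z t0) (at z)" for z
    using m.H_deriv[of 1 t0 z] t0 by (simp add: numeral_2_eq_2)
  have fh: "deriv (\<lambda>y. risk_tol u y t0) (h z) = g z" for z
    unfolding g_def
  proof (rule rx_formula[of u t0 h "\<lambda>z. m.H 1 z t0" "\<lambda>z. m.H 2 z t0"])
    show "(deriv ^^ n) (\<lambda>y. u y t0) differentiable (at x)" if "x > 0" for x n
      using smooth_x[OF that t0] .
    show "dx u (h z) t0 = exp (- z + t0 / 2)" for z
      using rel[OF t0, of z] unfolding h_def m.hfun_H .
  qed (use dh dh1 hpos h1pos in auto)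
  have h_top: "filterlim h at_top at_top"
  proof -
    have "filterlim (\<lambda>z. a * z + 0) at_top at_top" using apos by (rule exp_lin_at_top)
    then have "filterlim (\<lambda>z. exp (a * z + 0)) at_top at_top" by (rule filterlim_compose[OF exp_at_top])
    then have "filterlim (\<lambda>z. m.G a 0 t0 z * exp (a * z)) at_top at_top"
      using filterlim_tendsto_pos_mult_at_top[OF GL[of 0]] Epos by simp
    moreover have "m.G a 0 t0 z * exp (a * z) = h z" for z
      unfolding GH h_def by (simp add: exp_minus field_simps)
    ultimately show ?thesis by simp
  qed
  have hmono: "h x \<le> h y" if "x \<le> y" for x y
    using DERIV_nonneg_imp_nondecreasing[OF that] dh h1pos by (meson less_imp_le)
  have hcont: "isCont h x" for x using dh by (rule DERIV_isCont)
  have surj: "\<exists>z. h z = x" if "x \<ge> h 0" for x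
  proof -
    obtain N where N: "\<And>z. z \<ge> N \<Longrightarrow> h z \<ge> x"
      using h_top unfolding filterlim_at_top eventually_at_top_linorder by blast
    have "\<exists>z\<ge>0. z \<le> max N 0 \<and> h z = x"
      by (rule IVT[of h 0 x "max N 0"]) (use that N hcont in auto)
    then show ?thesis by blast
  qed
  define zi where "zi x = (SOME z. h z = x)" for x
  have zi: "h (zi x) = x" if "x \<ge> h 0" for x
    unfolding zi_def using someI_ex[OF surj[OF that]] .
  have zi_top: "filterlim zi at_top at_top"
    unfolding filterlim_at_top
  proof
    fix Z
    show "\<forall>\<^sub>F x in at_top. Z \<le> zi x"
      using eventually_gt_at_top[of "max (h Z) (h 0)"]
    proof eventually_elim
      case (elim x)
      show ?case
      proof (rule ccontr)
        assume "\<not> Z \<le> zi x"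
        then have "h (zi x) \<le> h Z" by (intro hmono) simp
        then show False using zi[of x] elim by simp
      qed
    qed
  qed
  have "((\<lambda>x. g (zi x)) \<longlongrightarrow> a) at_top"
    by (rule filterlim_compose[OF g_lim zi_top])
  moreover have "\<forall>\<^sub>F x in at_top. g (zi x) = deriv (\<lambda>y. risk_tol u y t0) x"
    using eventually_ge_at_top[of "h 0"]
  proof eventually_elim
    case (elim x)
    show ?case using fh[of "zi x"] zi[OF elim] by simp
  qed
  ultimately have "((\<lambda>x. deriv (\<lambda>y. risk_tol u y t0) x) \<longlongrightarrow> a) at_top"
    by (rule Lim_transform_eventually)
  then show ?thesis unfolding a_def .
qed


end
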